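(* In the setting described in the context, for every $c_1^*\in\arg\min_{c'\in[K]\setminus\{c^*\}} P_1(c')$ we have $P_1(c_1^* )=P_2(c_1^* )$.
   Context: Let $N_p\ge 1$ and $K\ge 2$ be integers, and write $[m]=\{1,\dots,m\}$. Let real numbers $\rho_i^c$ be given for $i\in[N_p]$ and $c\in[K]$. A vote configuration is a matrix $\tilde V=(\tilde v_i^c)\in\{0,1\}^{N_p\times K}$ with $\sum_{c=1}^K \tilde v_i^c=1$ for every $i\in[N_p]$. Its cost is $O(\tilde V)=\sum_{i=1}^{N_p}\sum_{c=1}^K \rho_i^c\,\tilde v_i^c$. Let $\mathrm{majVote}(\tilde V)$ denote the smallest index among the maximizers of $c\mapsto \sum_{i=1}^{N_p}\tilde v_i^c$. Fix a class $c^*\in[K]$. For $c'\in[K]$ define: - $P_1(c')=\min\{O(\tilde V): \tilde V \text{ a vote configuration with } \sum_{i=1}^{N_p}(\tilde v_i^{c'}-\tilde v_i^{c})\ge \mathbf 1_{c<c'}\ \forall c\in[K]\setminus\{c'\}\}$. The constraint is equivalent to $\mathrm{majVote}(\tilde V)=c'$. - $P_2(c')=\min\{O(\tilde V): \tilde V \text{ a vote configuration with } \sum_{i=1}^{N_p}(\tilde v_i^{c'}-\tilde v_i^{c^*})\ge \mathbf 1_{c^*<c'}\}$. Here $\mathbf 1_{a<b}$ equals $1$ if $a<b$ and $0$ otherwise. *)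

theory Defs
  imports Complex_Main
begin

text \<open>A vote configuration is a
 0/1 matrix V with exactly one 1 in every row; entries outside the index
 ranges are fixed to 0 so that the set of configurations is finite.\<close>

definition vote_config :: "nat \<Rightarrow> nat \<Rightarrow> (nat \<Rightarrow> nat \<Rightarrow> nat) \<Rightarrow> bool" where
  "vote_config Np K V \<longleftrightarrow>
     (\<forall>i c. V i c \<in> {0, 1}) \<and>
     (\<forall>i c. (i \<notin> {1..Np} \<or> c \<notin> {1..K}) \<longrightarrow> V i c = 0) \<and>
     (\<forall>i\<in>{1..Np}. (\<Sum>c=1..K. V i c) = 1)"

definition cost :: "nat \<Rightarrow> nat \<Rightarrow> (nat \<Rightarrow> nat \<Rightarrow> real) \<Rightarrow> (nat \<Rightarrow> nat \<Rightarrow> nat) \<Rightarrow> real" where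
  "cost Np K \<rho> V = (\<Sum>i=1..Np. \<Sum>c=1..K. \<rho> i c * real (V i c))"

definition votes :: "nat \<Rightarrow> (nat \<Rightarrow> nat \<Rightarrow> nat) \<Rightarrow> nat \<Rightarrow> int" where
  "votes Np V c = (\<Sum>i=1..Np. int (V i c))"

definition ind_lt :: "nat \<Rightarrow> nat \<Rightarrow> int" where
  "ind_lt a b = (if a < b then 1 else 0)"

definition P1 :: "nat \<Rightarrow> nat \<Rightarrow> (nat \<Rightarrow> nat \<Rightarrow> real) \<Rightarrow> nat \<Rightarrow> real" where
  "P1 Np K \<rho> c' = Min {cost Np K \<rho> V | V. vote_config Np K V \<and>
       (\<forall>c\<in>{1..K} - {c'}. votes Np V c' - votes Np V c \<ge> ind_lt c c')}"

definition P2 :: "nat \<Rightarrow> nat \<Rightarrow> (nat \<Rightarrow> nat \<Rightarrow> real) \<Rightarrow> nat \<Rightarrow> nat \<Rightarrow> real" where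
  "P2 Np K \<rho> cstar c' = Min {cost Np K \<rho> V | V. vote_config Np K V \<and>
       votes Np V c' - votes Np V cstar \<ge> ind_lt cstar c'}"

end

theory Submission
  imports Defs
begin

lemma vc_finite: "finite {V. vote_config Np K V}"
proof -
  define B where "B = {g::nat\<Rightarrow>nat. \<forall>x. (x \<in> {1..K} \<longrightarrow> g x \<in> {0,1}) \<and> (x \<notin> {1..K} \<longrightarrow> g x = 0)}"
  have fB: "finite B" unfolding B_def by (rule finite_set_of_finite_funs) auto
  have f2: "finite {f. \<forall>x. (x \<in> {1..Np} \<longrightarrow> f x \<in> B) \<and> (x \<notin> {1..Np} \<longrightarrow> f x = (\<lambda>_. 0))}"
    by (rule finite_set_of_finite_funs) (auto simp: fB)
  have "{V. vote_config Np K V} \<subseteq> {f. \<forall>x. (x \<in> {1..Np} \<longrightarrow> f x \<in> B) \<and> (x \<notin> {1..Np} \<longrightarrow> f x = (\<lambda>_. 0))}"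
  proof (intro subsetI CollectI allI conjI impI)
    fix V x assume "V \<in> {V. vote_config Np K V}"
    then have v: "vote_config Np K V" by simp
    { assume "x \<in> {1..Np}" then show "V x \<in> B" using v unfolding B_def vote_config_def by blast }
    { assume "x \<notin> {1..Np}" then show "V x = (\<lambda>_. 0)" using v unfolding vote_config_def by blast }
  qed
  then show ?thesis using f2 finite_subset by blast
qed

lemma fin_img: "finite {cost Np K \<rho> V | V. vote_config Np K V \<and> P V}"
proof -
  have "{cost Np K \<rho> V | V. vote_config Np K V \<and> P V} \<subseteq> cost Np K \<rho> ` {V. vote_config Np K V}"
    by auto
  thus ?thesis using vc_finite finite_subset by blast
qed

lemma majvote_exists:
  assumes "K \<ge> 1"
  shows "\<exists>m\<in>{1..K}. \<forall>c\<in>{1..K} - {m}. votes Np V m - votes Np V c \<ge> ind_lt c m"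
proof -
  define f where "f = votes Np V"
  define M where "M = Max (f ` {1..K})"
  have ne: "{1..K} \<noteq> {}" using assms by auto
  have "M \<in> f ` {1..K}" unfolding M_def using ne by (intro Max_in) auto
  then have ex: "\<exists>m. m \<in> {1..K} \<and> f m = M" by auto
  define m where "m = (LEAST m. m \<in> {1..K} \<and> f m = M)"
  have m: "m \<in> {1..K} \<and> f m = M" unfolding m_def using ex by (rule LeastI_ex)
  have le: "f c \<le> M" if "c \<in> {1..K}" for c
    unfolding M_def using that by (intro Max_ge) auto
  have lt: "\<not> (c \<in> {1..K} \<and> f c = M)" if "c < m" for c
    using not_less_Least[of c "\<lambda>m. m \<in> {1..K} \<and> f m = M"] that unfolding m_def by blast
  have "\<forall>c\<in>{1..K} - {m}. f m - f c \<ge> ind_lt c m"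
  proof
    fix c assume c: "c \<in> {1..K} - {m}"
    then have c1: "c \<in> {1..K}" by simp
    show "f m - f c \<ge> ind_lt c m"
    proof (cases "c < m")
      case True
      have "f c \<noteq> M" using lt[OF True] c1 by blast
      then have "f c < M" using le[OF c1] by linarith
      then show ?thesis using m True unfolding ind_lt_def by simp
    next
      case False
      then show ?thesis using m le[OF c1] unfolding ind_lt_def by simp
    qed
  qed
  then show ?thesis using m unfolding f_def by blast
qed

theorem lemma1p2:
  fixes Np K cstar c1 :: nat and \<rho> :: "nat \<Rightarrow> nat \<Rightarrow> real"
  assumes "Np \<ge> 1" and "K \<ge> 2" and "cstar \<in> {1..K}"
    and "c1 \<in> {1..K} - {cstar}"
    and "\<forall>c'\<in>{1..K} - {cstar}. P1 Np K \<rho> c1 \<le> P1 Np K \<rho> c'"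
  shows "P1 Np K \<rho> c1 = P2 Np K \<rho> cstar c1"
proof -
  define S1 where "S1 = (\<lambda>c'. {cost Np K \<rho> V | V. vote_config Np K V \<and>
       (\<forall>c\<in>{1..K} - {c'}. votes Np V c' - votes Np V c \<ge> ind_lt c c')})"
  define S2 where "S2 = {cost Np K \<rho> V | V. vote_config Np K V \<and>
       votes Np V c1 - votes Np V cstar \<ge> ind_lt cstar c1}"
  have P1e: "P1 Np K \<rho> c' = Min (S1 c')" for c' unfolding P1_def S1_def by simp
  have P2e: "P2 Np K \<rho> cstar c1 = Min S2" unfolding P2_def S2_def by simp
  have fS1: "finite (S1 c')" for c' unfolding S1_def by (rule fin_img)
  have fS2: "finite S2" unfolding S2_def by (rule fin_img)
  have sub: "S1 c1 \<subseteq> S2" unfolding S1_def S2_def using assms(3,4) by fastforce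
  define W where "W = (\<lambda>i c. if i \<in> {1..Np} \<and> c = c1 then 1 else (0::nat))"
  have Wvc: "vote_config Np K W" using assms(4)
    unfolding vote_config_def W_def by (auto simp: sum.delta)
  have vW: "votes Np W c = (if c = c1 then int Np else 0)" for c
    unfolding votes_def W_def by auto
  have "cost Np K \<rho> W \<in> S1 c1" unfolding S1_def
    using Wvc assms(1) by (auto simp: vW ind_lt_def)
  then have ne1: "S1 c1 \<noteq> {}" by auto
  have ge: "Min (S1 c1) \<ge> Min S2" using sub ne1 fS2 by (rule Min_antimono)
  have ne2: "S2 \<noteq> {}" using sub ne1 by auto
  have "Min S2 \<in> S2" using fS2 ne2 by (rule Min_in)
  then obtain V where V: "vote_config Np K V" "votes Np V c1 - votes Np V cstar \<ge> ind_lt cstar c1"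
    and cV: "Min S2 = cost Np K \<rho> V" unfolding S2_def by auto
  obtain m where m: "m \<in> {1..K}" "\<forall>c\<in>{1..K} - {m}. votes Np V m - votes Np V c \<ge> ind_lt c m"
    using majvote_exists[of K Np V] assms(2) by auto
  have "m \<noteq> cstar"
  proof
    assume "m = cstar"
    then have "votes Np V cstar - votes Np V c1 \<ge> ind_lt c1 cstar" using m(2) assms(4) by auto
    then show False using V(2) assms(4) by (auto simp: ind_lt_def split: if_splits)
  qed
  then have "P1 Np K \<rho> c1 \<le> P1 Np K \<rho> m" using assms(5) m(1) by auto
  moreover have "cost Np K \<rho> V \<in> S1 m" unfolding S1_def using V(1) m(2) by auto
  then have "Min (S1 m) \<le> cost Np K \<rho> V" using fS1 by (intro Min_le)
  ultimately have "Min (S1 c1) \<le> Min S2" using P1e cV by simp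
  then show ?thesis using ge P1e P2e by simp
qed

end
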